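(* Let $R$ be a commutative Noetherian ring with $1$ in which linear equations are solvable, let $>$ be a local degree ordering on $\operatorname{Mon}_n$, let $I$ be an ideal of $R[x_1,\ldots,x_n]$, and let $G$ be a standard basis (respectively a strong standard basis) of $I$ with respect to $>$. Then $G$ is a standard basis (respectively a strong standard basis) of $I\,R[[x_1,\ldots,x_n]]$.
   Context: Linear equations are solvable in $R$ means: for any $a,a_1,\ldots,a_m\in R$ there are algorithms to compute generators of $\{(b_1,\ldots,b_m)\in R^m:\sum a_ib_i=0\}$, to decide whether $a\in\langle a_1,\ldots,a_m\rangle$, and if so to compute $b_i$ with $a=\sum b_ia_i$. A monomial ordering is a total ordering $>$ on $\operatorname{Mon}_n=\{x^\alpha\}$ compatible with multiplication; it is local if $x^\alpha<1$ for all $\alpha\neq0$, and a local degree ordering if it is local and $x^\alpha>x^\beta$ implies $\deg x^\alpha\le\deg x^\beta$. For a nonzero polynomial or power series $f=\sum_{v\ge0}a_vx^{\alpha_v}$ with $a_v\neq0$ and $x^{\alpha_0}>x^{\alpha_1}>\cdots$, $LM(f)=x^{\alpha_0}$, $LC(f)=a_0$, $LT(f)=a_0x^{\alpha_0}$. $S_>=\{u\in R[x_1,\ldots,x_n]\setminus\{0\}:LT(u)=1\}$, $R[x_1,\ldots,x_n]_>=S_>^{-1}R[x_1,\ldots,x_n]$, which (for local $>$) is naturally contained in $R[[x_1,\ldots,x_n]]$; for $f\in R[x_1,\ldots,x_n]_>$, $LT(f):=LT(uf)$ for $u\in S_>$ with $uf$ a polynomial. For a set $G$, $L(G)$ is the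 ideal of $R[x_1,\ldots,x_n]$ generated by $\{LT(g):g\in G\}$. A standard basis of an ideal $I$ of $R[x_1,\ldots,x_n]$ means a standard basis of $I\,R[x_1,\ldots,x_n]_>$. For an ideal $J$ (of $R[x_1,\ldots,x_n]_>$ or of $R[[x_1,\ldots,x_n]]$), a finite set $G=\{g_1,\ldots,g_t\}$ is a standard basis of $J$ if $G\subseteq J$ and $L(G)=L(J)$, and a strong standard basis if $G\subseteq J$ and for every $f\in J\setminus\{0\}$ there is $i$ with $LT(g_i)$ dividing $LT(f)$ (i.e. $LT(f)=c\,x^\gamma LT(g_i)$ for some $c\in R$, $x^\gamma\in\operatorname{Mon}_n$). *)

theory Defs
  imports Main
begin

text \<open>Variables x_1..x_n are indexed by a finite type 'v (n = CARD('v)). Power series over R are arbitrary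
  coefficient functions; polynomials are those with finite support.\<close>

type_synonym ('v, 'a) ser = "('v \<Rightarrow> nat) \<Rightarrow> 'a"

definition ser_zero :: "('v, 'a::zero) ser" where
  "ser_zero = (\<lambda>_. 0)"

definition ser_add :: "('v, 'a::plus) ser \<Rightarrow> ('v, 'a) ser \<Rightarrow> ('v, 'a) ser" where
  "ser_add f g = (\<lambda>\<alpha>. f \<alpha> + g \<alpha>)"

definition ser_mult :: "('v::finite, 'a::comm_ring_1) ser \<Rightarrow> ('v, 'a) ser \<Rightarrow> ('v, 'a) ser" where
  "ser_mult f g = (\<lambda>\<gamma>. \<Sum>\<alpha>\<in>{\<alpha>. \<forall>i. \<alpha> i \<le> \<gamma> i}. f \<alpha> * g (\<lambda>i. \<gamma> i - \<alpha> i))"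

definition monom_term :: "'a::zero \<Rightarrow> ('v \<Rightarrow> nat) \<Rightarrow> ('v, 'a) ser" where
  "monom_term c \<gamma> = (\<lambda>\<alpha>. if \<alpha> = \<gamma> then c else 0)"

definition ser_one :: "('v, 'a::{zero,one}) ser" where
  "ser_one = monom_term 1 (\<lambda>_. 0)"

definition is_poly :: "('v, 'a::zero) ser \<Rightarrow> bool" where
  "is_poly f \<longleftrightarrow> finite {\<alpha>. f \<alpha> \<noteq> 0}"

definition mdeg :: "('v::finite \<Rightarrow> nat) \<Rightarrow> nat" where
  "mdeg \<alpha> = (\<Sum>i\<in>UNIV. \<alpha> i)"

text \<open>gt \<alpha> \<beta> means x^\<alpha> > x^\<beta>.\<close>
definition monomial_ordering :: "(('v \<Rightarrow> nat) \<Rightarrow> ('v \<Rightarrow> nat) \<Rightarrow> bool) \<Rightarrow> bool" where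
  "monomial_ordering gt \<longleftrightarrow>
     (\<forall>\<alpha>. \<not> gt \<alpha> \<alpha>) \<and>
     (\<forall>\<alpha> \<beta> \<gamma>. gt \<alpha> \<beta> \<longrightarrow> gt \<beta> \<gamma> \<longrightarrow> gt \<alpha> \<gamma>) \<and>
     (\<forall>\<alpha> \<beta>. \<alpha> \<noteq> \<beta> \<longrightarrow> gt \<alpha> \<beta> \<or> gt \<beta> \<alpha>) \<and>
     (\<forall>\<alpha> \<beta> \<gamma>. gt \<alpha> \<beta> \<longrightarrow> gt (\<lambda>i. \<alpha> i + \<gamma> i) (\<lambda>i. \<beta> i + \<gamma> i))"

definition local_ordering :: "(('v \<Rightarrow> nat) \<Rightarrow> ('v \<Rightarrow> nat) \<Rightarrow> bool) \<Rightarrow> bool" where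
  "local_ordering gt \<longleftrightarrow> monomial_ordering gt \<and> (\<forall>\<alpha>. \<alpha> \<noteq> (\<lambda>_. 0) \<longrightarrow> gt (\<lambda>_. 0) \<alpha>)"

definition local_degree_ordering :: "(('v::finite \<Rightarrow> nat) \<Rightarrow> ('v \<Rightarrow> nat) \<Rightarrow> bool) \<Rightarrow> bool" where
  "local_degree_ordering gt \<longleftrightarrow> local_ordering gt \<and> (\<forall>\<alpha> \<beta>. gt \<alpha> \<beta> \<longrightarrow> mdeg \<alpha> \<le> mdeg \<beta>)"

definition LM :: "(('v \<Rightarrow> nat) \<Rightarrow> ('v \<Rightarrow> nat) \<Rightarrow> bool) \<Rightarrow> ('v, 'a::zero) ser \<Rightarrow> ('v \<Rightarrow> nat)" where
  "LM gt f = (THE \<alpha>. f \<alpha> \<noteq> 0 \<and> (\<forall>\<beta>. f \<beta> \<noteq> 0 \<and> \<beta> \<noteq> \<alpha> \<longrightarrow> gt \<alpha> \<beta>))"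

definition LC :: "(('v \<Rightarrow> nat) \<Rightarrow> ('v \<Rightarrow> nat) \<Rightarrow> bool) \<Rightarrow> ('v, 'a::zero) ser \<Rightarrow> 'a" where
  "LC gt f = f (LM gt f)"

definition LT :: "(('v \<Rightarrow> nat) \<Rightarrow> ('v \<Rightarrow> nat) \<Rightarrow> bool) \<Rightarrow> ('v, 'a::zero) ser \<Rightarrow> ('v, 'a) ser" where
  "LT gt f = monom_term (LC gt f) (LM gt f)"

definition ring_ideal :: "'a::comm_ring_1 set \<Rightarrow> bool" where
  "ring_ideal J \<longleftrightarrow> 0 \<in> J \<and> (\<forall>a\<in>J. \<forall>b\<in>J. a + b \<in> J) \<and> (\<forall>r. \<forall>a\<in>J. r * a \<in> J)"

definition noetherian :: "'a::comm_ring_1 itself \<Rightarrow> bool" where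
  "noetherian _ \<longleftrightarrow> (\<forall>J::'a set. ring_ideal J \<longrightarrow>
      (\<exists>F. finite F \<and> J = {\<Sum>a\<in>F. r a * a | r. True}))"

definition poly_ideal :: "('v::finite, 'a::comm_ring_1) ser set \<Rightarrow> bool" where
  "poly_ideal I \<longleftrightarrow> (\<forall>f\<in>I. is_poly f) \<and> ser_zero \<in> I \<and>
     (\<forall>f\<in>I. \<forall>g\<in>I. ser_add f g \<in> I) \<and>
     (\<forall>p f. is_poly p \<longrightarrow> f \<in> I \<longrightarrow> ser_mult p f \<in> I)"

definition poly_ideal_gen :: "('v::finite, 'a::comm_ring_1) ser set \<Rightarrow> ('v, 'a) ser set" where
  "poly_ideal_gen F = \<Inter>{J. poly_ideal J \<and> F \<subseteq> J}"

definition ser_ideal :: "('v::finite, 'a::comm_ring_1) ser set \<Rightarrow> bool" where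
  "ser_ideal J \<longleftrightarrow> ser_zero \<in> J \<and> (\<forall>f\<in>J. \<forall>g\<in>J. ser_add f g \<in> J) \<and>
     (\<forall>h f. f \<in> J \<longrightarrow> ser_mult h f \<in> J)"

text \<open>I R[[x]]: the ideal of R[[x]] generated by I.\<close>
definition ser_ideal_gen :: "('v::finite, 'a::comm_ring_1) ser set \<Rightarrow> ('v, 'a) ser set" where
  "ser_ideal_gen F = \<Inter>{J. ser_ideal J \<and> F \<subseteq> J}"

text \<open>S_> and I R[x]_> = S_>^{-1} I, viewed inside R[[x]].\<close>
definition S_gt :: "(('v \<Rightarrow> nat) \<Rightarrow> ('v \<Rightarrow> nat) \<Rightarrow> bool) \<Rightarrow> ('v, 'a::{zero,one}) ser set" where
  "S_gt gt = {u. is_poly u \<and> u \<noteq> ser_zero \<and> LT gt u = ser_one}"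

definition loc_ideal :: "(('v::finite \<Rightarrow> nat) \<Rightarrow> ('v \<Rightarrow> nat) \<Rightarrow> bool) \<Rightarrow> ('v, 'a::comm_ring_1) ser set \<Rightarrow> ('v, 'a) ser set" where
  "loc_ideal gt I = {h. \<exists>u\<in>S_gt gt. ser_mult u h \<in> I}"

definition Lid :: "(('v::finite \<Rightarrow> nat) \<Rightarrow> ('v \<Rightarrow> nat) \<Rightarrow> bool) \<Rightarrow> ('v, 'a::comm_ring_1) ser set \<Rightarrow> ('v, 'a) ser set" where
  "Lid gt G = poly_ideal_gen (LT gt ` (G - {ser_zero}))"

definition standard_basis :: "(('v::finite \<Rightarrow> nat) \<Rightarrow> ('v \<Rightarrow> nat) \<Rightarrow> bool) \<Rightarrow> ('v, 'a::comm_ring_1) ser set \<Rightarrow> ('v, 'a) ser set \<Rightarrow> bool" where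
  "standard_basis gt G J \<longleftrightarrow> finite G \<and> G \<subseteq> J \<and> Lid gt G = Lid gt J"

definition strong_standard_basis :: "(('v::finite \<Rightarrow> nat) \<Rightarrow> ('v \<Rightarrow> nat) \<Rightarrow> bool) \<Rightarrow> ('v, 'a::comm_ring_1) ser set \<Rightarrow> ('v, 'a) ser set \<Rightarrow> bool" where
  "strong_standard_basis gt G J \<longleftrightarrow> finite G \<and> G \<subseteq> J \<and>
     (\<forall>f\<in>J - {ser_zero}. \<exists>g\<in>G. \<exists>c \<gamma>. LT gt f = ser_mult (monom_term c \<gamma>) (LT gt g))"

end

theory Submission
  imports Defs
begin

abbreviation lev :: "('v \<Rightarrow> nat) \<Rightarrow> ('v \<Rightarrow> nat) \<Rightarrow> bool" where
  "lev a b \<equiv> \<forall>i. a i \<le> b i"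

lemma finite_lev: "finite {\<alpha>::'v::finite\<Rightarrow>nat. lev \<alpha> \<gamma>}"
proof -
  have "{\<alpha>::'v\<Rightarrow>nat. lev \<alpha> \<gamma>} \<subseteq> {f. \<forall>x. (x \<in> UNIV \<longrightarrow> f x \<in> {..Max (range \<gamma>)}) \<and> (x \<notin> UNIV \<longrightarrow> f x = 0)}"
  proof (intro subsetI CollectI allI conjI impI)
    fix \<alpha> :: "'v\<Rightarrow>nat" and x assume "\<alpha> \<in> {\<alpha>. lev \<alpha> \<gamma>}"
    then have "\<alpha> x \<le> \<gamma> x" by blast
    also have "\<gamma> x \<le> Max (range \<gamma>)" by (rule Max_ge) simp_all
    finally show "\<alpha> x \<in> {..Max (range \<gamma>)}" by simp
  next
    fix \<alpha> :: "'v\<Rightarrow>nat" and x :: 'v assume "x \<notin> UNIV" then show "\<alpha> x = 0" by simp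
  qed
  moreover have "finite {f::'v\<Rightarrow>nat. \<forall>x. (x \<in> UNIV \<longrightarrow> f x \<in> {..Max (range \<gamma>)}) \<and> (x \<notin> UNIV \<longrightarrow> f x = 0)}"
    by (rule finite_set_of_finite_funs) auto
  ultimately show ?thesis by (rule finite_subset)
qed

lemma finite_mdeg_le: "finite {\<alpha>::'v::finite\<Rightarrow>nat. mdeg \<alpha> \<le> d}"
proof -
  have "{\<alpha>::'v\<Rightarrow>nat. mdeg \<alpha> \<le> d} \<subseteq> {\<alpha>. lev \<alpha> (\<lambda>_. d)}"
  proof safe
    fix \<alpha> :: "'v \<Rightarrow> nat" and i assume "mdeg \<alpha> \<le> d"
    moreover have "\<alpha> i \<le> mdeg \<alpha>" unfolding mdeg_def by (rule member_le_sum) simp_all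
    ultimately show "\<alpha> i \<le> d" by simp
  qed
  thus ?thesis by (rule finite_subset[OF _ finite_lev])
qed

lemma mdeg_mono: "lev \<alpha> \<gamma> \<Longrightarrow> mdeg \<alpha> \<le> mdeg (\<gamma>::'v::finite\<Rightarrow>nat)"
  unfolding mdeg_def by (rule sum_mono) auto

lemma mdeg_strict: "lev \<alpha> \<gamma> \<Longrightarrow> \<alpha> \<noteq> \<gamma> \<Longrightarrow> mdeg \<alpha> < mdeg (\<gamma>::'v::finite\<Rightarrow>nat)"
proof -
  assume a: "lev \<alpha> \<gamma>" "\<alpha> \<noteq> \<gamma>"
  then obtain j where "\<alpha> j \<noteq> \<gamma> j" by auto
  with a have "\<alpha> j < \<gamma> j" using le_neq_implies_less by blast
  thus ?thesis unfolding mdeg_def using a by (intro sum_strict_mono_ex1) auto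
qed

lemma mdeg_diff: "lev \<alpha> \<gamma> \<Longrightarrow> mdeg (\<lambda>i. \<gamma> i - \<alpha> i) \<le> mdeg (\<gamma>::'v::finite\<Rightarrow>nat)"
  unfolding mdeg_def by (rule sum_mono) auto

lemma mdeg_zero_iff: "mdeg (\<alpha>::'v::finite\<Rightarrow>nat) = 0 \<longleftrightarrow> \<alpha> = (\<lambda>_. 0)"
  unfolding mdeg_def by (auto simp: fun_eq_iff)

lemma ser_mult_assoc:
  fixes f g h :: "('v::finite, 'a::comm_ring_1) ser"
  shows "ser_mult (ser_mult f g) h = ser_mult f (ser_mult g h)"
proof
  fix \<gamma> :: "'v \<Rightarrow> nat"
  let ?D = "\<lambda>\<gamma>. {\<alpha>::'v\<Rightarrow>nat. lev \<alpha> \<gamma>}"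
  have "ser_mult (ser_mult f g) h \<gamma> = (\<Sum>\<alpha>\<in>?D \<gamma>. \<Sum>\<beta>\<in>?D \<alpha>. f \<beta> * g (\<lambda>i. \<alpha> i - \<beta> i) * h (\<lambda>i. \<gamma> i - \<alpha> i))"
    unfolding ser_mult_def by (simp add: sum_distrib_right)
  also have "\<dots> = (\<Sum>\<alpha>\<in>?D \<gamma>. \<Sum>\<beta>\<in>{\<beta>. \<beta> \<in> ?D \<gamma> \<and> lev \<beta> \<alpha>}. f \<beta> * g (\<lambda>i. \<alpha> i - \<beta> i) * h (\<lambda>i. \<gamma> i - \<alpha> i))"
    by (rule sum.cong) (auto intro!: sum.cong intro: order_trans)
  also have "\<dots> = (\<Sum>\<beta>\<in>?D \<gamma>. \<Sum>\<alpha>\<in>{\<alpha>. \<alpha> \<in> ?D \<gamma> \<and> lev \<beta> \<alpha>}. f \<beta> * g (\<lambda>i. \<alpha> i - \<beta> i) * h (\<lambda>i. \<gamma> i - \<alpha> i))"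
    by (rule sum.swap_restrict) (simp_all add: finite_lev)
  also have "\<dots> = (\<Sum>\<beta>\<in>?D \<gamma>. \<Sum>\<delta>\<in>?D (\<lambda>i. \<gamma> i - \<beta> i). f \<beta> * g \<delta> * h (\<lambda>i. \<gamma> i - \<beta> i - \<delta> i))"
  proof (rule sum.cong[OF refl])
    fix \<beta> assume b: "\<beta> \<in> ?D \<gamma>"
    have bij: "bij_betw (\<lambda>\<delta> i. \<beta> i + \<delta> i) (?D (\<lambda>i. \<gamma> i - \<beta> i)) {\<alpha>. \<alpha> \<in> ?D \<gamma> \<and> lev \<beta> \<alpha>}"
    proof (rule bij_betw_byWitness[where f' = "\<lambda>\<alpha> i. \<alpha> i - \<beta> i"])
      show "\<forall>a\<in>?D (\<lambda>i. \<gamma> i - \<beta> i). (\<lambda>i. (\<beta> i + a i) - \<beta> i) = a" by simp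
      show "\<forall>a\<in>{\<alpha>. \<alpha> \<in> ?D \<gamma> \<and> lev \<beta> \<alpha>}. (\<lambda>i. \<beta> i + (a i - \<beta> i)) = a"
        by (simp add: fun_eq_iff)
      show "(\<lambda>\<delta> i. \<beta> i + \<delta> i) ` ?D (\<lambda>i. \<gamma> i - \<beta> i) \<subseteq> {\<alpha>. \<alpha> \<in> ?D \<gamma> \<and> lev \<beta> \<alpha>}"
      proof clarsimp
        fix \<delta> i assume "\<forall>i. \<delta> i \<le> \<gamma> i - \<beta> i"
        then have "\<delta> i \<le> \<gamma> i - \<beta> i" by blast
        moreover have "\<beta> i \<le> \<gamma> i" using b by simp
        ultimately show "\<beta> i + \<delta> i \<le> \<gamma> i" by linarith
      qed
      show "(\<lambda>\<alpha> i. \<alpha> i - \<beta> i) ` {\<alpha>. \<alpha> \<in> ?D \<gamma> \<and> lev \<beta> \<alpha>} \<subseteq> ?D (\<lambda>i. \<gamma> i - \<beta> i)"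
        by (auto simp: diff_le_mono)
    qed
    show "(\<Sum>\<alpha>\<in>{\<alpha>. \<alpha> \<in> ?D \<gamma> \<and> lev \<beta> \<alpha>}. f \<beta> * g (\<lambda>i. \<alpha> i - \<beta> i) * h (\<lambda>i. \<gamma> i - \<alpha> i))
        = (\<Sum>\<delta>\<in>?D (\<lambda>i. \<gamma> i - \<beta> i). f \<beta> * g \<delta> * h (\<lambda>i. \<gamma> i - \<beta> i - \<delta> i))"
      by (rule sum.reindex_bij_betw[OF bij, symmetric, THEN trans]) (simp add: diff_diff_add)
  qed
  also have "\<dots> = ser_mult f (ser_mult g h) \<gamma>"
    unfolding ser_mult_def by (simp add: sum_distrib_left mult.assoc)
  finally show "ser_mult (ser_mult f g) h \<gamma> = ser_mult f (ser_mult g h) \<gamma>" .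
qed


lemma ser_one_mult: "ser_mult ser_one g = (g::('v::finite,'a::comm_ring_1) ser)"
proof
  fix \<gamma> :: "'v\<Rightarrow>nat"
  have "ser_mult ser_one g \<gamma> = (\<Sum>\<alpha>\<in>{\<alpha>. lev \<alpha> \<gamma>}. if \<alpha> = (\<lambda>_. 0) then g (\<lambda>i. \<gamma> i - \<alpha> i) else 0)"
    unfolding ser_mult_def ser_one_def monom_term_def by (rule sum.cong) simp_all
  also have "\<dots> = g \<gamma>" by (subst sum.delta) (simp_all add: finite_lev)
  finally show "ser_mult ser_one g \<gamma> = g \<gamma>" .
qed

fun hinv :: "('v::finite,'a::comm_ring_1) ser \<Rightarrow> nat \<Rightarrow> ('v,'a) ser" where
  "hinv u 0 = (\<lambda>\<gamma>. if \<gamma> = (\<lambda>_. 0) then 1 else 0)"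
| "hinv u (Suc n) = (\<lambda>\<gamma>. if \<gamma> = (\<lambda>_. 0) then 1 else
      - (\<Sum>\<alpha>\<in>{\<alpha>. lev \<alpha> \<gamma> \<and> \<alpha> \<noteq> \<gamma>}. hinv u n \<alpha> * u (\<lambda>i. \<gamma> i - \<alpha> i)))"

lemma hinv_step: "mdeg \<gamma> \<le> n \<Longrightarrow> hinv u (Suc n) \<gamma> = hinv u n \<gamma>"
proof (induction n arbitrary: \<gamma>)
  case 0
  then have "\<gamma> = (\<lambda>_. 0)" using mdeg_zero_iff by auto
  then show ?case by simp
next
  case (Suc n)
  show ?case
  proof (cases "\<gamma> = (\<lambda>_. 0)")
    case True then show ?thesis by simp
  next
    case False
    have "(\<Sum>\<alpha>\<in>{\<alpha>. lev \<alpha> \<gamma> \<and> \<alpha> \<noteq> \<gamma>}. hinv u (Suc n) \<alpha> * u (\<lambda>i. \<gamma> i - \<alpha> i))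
        = (\<Sum>\<alpha>\<in>{\<alpha>. lev \<alpha> \<gamma> \<and> \<alpha> \<noteq> \<gamma>}. hinv u n \<alpha> * u (\<lambda>i. \<gamma> i - \<alpha> i))"
    proof (rule sum.cong[OF refl])
      fix \<alpha> assume "\<alpha> \<in> {\<alpha>. lev \<alpha> \<gamma> \<and> \<alpha> \<noteq> \<gamma>}"
      then have "mdeg \<alpha> < mdeg \<gamma>" using mdeg_strict by blast
      then have "mdeg \<alpha> \<le> n" using Suc.prems by simp
      then show "hinv u (Suc n) \<alpha> * u (\<lambda>i. \<gamma> i - \<alpha> i) = hinv u n \<alpha> * u (\<lambda>i. \<gamma> i - \<alpha> i)"
        using Suc.IH by simp
    qed
    then show ?thesis using False by (simp only: hinv.simps)
  qed
qed

lemma hinv_stable: "mdeg \<gamma> \<le> n \<Longrightarrow> hinv u n \<gamma> = hinv u (mdeg \<gamma>) \<gamma>"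
proof (induction n rule: dec_induct)
  case (step m)
  then show ?case using hinv_step[of \<gamma> m u] by simp
qed simp

definition hi :: "('v::finite,'a::comm_ring_1) ser \<Rightarrow> ('v,'a) ser" where
  "hi u = (\<lambda>\<gamma>. hinv u (mdeg \<gamma>) \<gamma>)"

lemma hi_zero: "hi u (\<lambda>_. 0) = 1"
  unfolding hi_def by (simp add: mdeg_def)

lemma hi_rec:
  assumes "\<gamma> \<noteq> (\<lambda>_. 0)"
  shows "hi u \<gamma> = - (\<Sum>\<alpha>\<in>{\<alpha>. lev \<alpha> \<gamma> \<and> \<alpha> \<noteq> \<gamma>}. hi u \<alpha> * u (\<lambda>i. \<gamma> i - \<alpha> i))"
proof -
  obtain m where m: "mdeg \<gamma> = Suc m" using assms mdeg_zero_iff by (metis not0_implies_Suc)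
  have "hi u \<gamma> = - (\<Sum>\<alpha>\<in>{\<alpha>. lev \<alpha> \<gamma> \<and> \<alpha> \<noteq> \<gamma>}. hinv u m \<alpha> * u (\<lambda>i. \<gamma> i - \<alpha> i))"
    unfolding hi_def m using assms by simp
  also have "(\<Sum>\<alpha>\<in>{\<alpha>. lev \<alpha> \<gamma> \<and> \<alpha> \<noteq> \<gamma>}. hinv u m \<alpha> * u (\<lambda>i. \<gamma> i - \<alpha> i))
      = (\<Sum>\<alpha>\<in>{\<alpha>. lev \<alpha> \<gamma> \<and> \<alpha> \<noteq> \<gamma>}. hi u \<alpha> * u (\<lambda>i. \<gamma> i - \<alpha> i))"
  proof (rule sum.cong[OF refl])
    fix \<alpha> assume "\<alpha> \<in> {\<alpha>. lev \<alpha> \<gamma> \<and> \<alpha> \<noteq> \<gamma>}"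
    then have "mdeg \<alpha> < mdeg \<gamma>" using mdeg_strict by blast
    then have "mdeg \<alpha> \<le> m" using m by simp
    then show "hinv u m \<alpha> * u (\<lambda>i. \<gamma> i - \<alpha> i) = hi u \<alpha> * u (\<lambda>i. \<gamma> i - \<alpha> i)"
      unfolding hi_def using hinv_stable by metis
  qed
  finally show ?thesis .
qed

lemma hi_inv:
  assumes u0: "u (\<lambda>_. 0) = (1::'a::comm_ring_1)"
  shows "ser_mult (hi u) u = (ser_one :: ('v::finite,'a) ser)"
proof
  fix \<gamma> :: "'v \<Rightarrow> nat"
  show "ser_mult (hi u) u \<gamma> = ser_one \<gamma>"
  proof (cases "\<gamma> = (\<lambda>_. 0)")
    case True
    have "{\<alpha>::'v\<Rightarrow>nat. lev \<alpha> \<gamma>} = {\<lambda>_. 0}" using True by (auto simp: fun_eq_iff)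
    then show ?thesis unfolding ser_mult_def ser_one_def monom_term_def
      using True u0 hi_zero[of u] by simp
  next
    case False
    have "ser_mult (hi u) u \<gamma> = hi u \<gamma> * u (\<lambda>i. \<gamma> i - \<gamma> i)
       + (\<Sum>\<alpha>\<in>{\<alpha>. lev \<alpha> \<gamma>} - {\<gamma>}. hi u \<alpha> * u (\<lambda>i. \<gamma> i - \<alpha> i))"
      unfolding ser_mult_def by (rule sum.remove) (simp_all add: finite_lev)
    also have "{\<alpha>. lev \<alpha> \<gamma>} - {\<gamma>} = {\<alpha>. lev \<alpha> \<gamma> \<and> \<alpha> \<noteq> \<gamma>}" by auto
    also have "hi u \<gamma> * u (\<lambda>i. \<gamma> i - \<gamma> i) = hi u \<gamma>" using u0 by simp
    finally have "ser_mult (hi u) u \<gamma> = 0" using hi_rec[OF False, of u] by simp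
    then show ?thesis using False unfolding ser_one_def monom_term_def by simp
  qed
qed

lemma Sgt_const:
  assumes "u \<in> S_gt gt"
  shows "u (\<lambda>_. 0) = (1::'a::comm_ring_1)"
proof -
  have e: "monom_term (LC gt u) (LM gt u) = monom_term 1 (\<lambda>_. 0)"
    using assms unfolding S_gt_def LT_def ser_one_def by simp
  have "LM gt u = (\<lambda>_. 0)"
  proof (rule ccontr)
    assume "LM gt u \<noteq> (\<lambda>_. 0)"
    then have "monom_term (LC gt u) (LM gt u) (\<lambda>_. 0) = 0" unfolding monom_term_def by auto
    moreover have "monom_term (1::'a) (\<lambda>_. 0) (\<lambda>_. 0) = 1" unfolding monom_term_def by simp
    ultimately show False using e by (metis zero_neq_one)
  qed
  moreover have "LC gt u = 1"
    using fun_cong[OF e, of "\<lambda>_. 0"] calculation unfolding monom_term_def by simp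
  ultimately show ?thesis unfolding LC_def by simp
qed


lemma LM_eqI:
  assumes mo: "monomial_ordering gt" and a: "f \<alpha> \<noteq> 0" and b: "\<forall>\<beta>. f \<beta> \<noteq> 0 \<and> \<beta> \<noteq> \<alpha> \<longrightarrow> gt \<alpha> \<beta>"
  shows "LM gt f = \<alpha>"
  unfolding LM_def
proof (rule the_equality)
  show "f \<alpha> \<noteq> 0 \<and> (\<forall>\<beta>. f \<beta> \<noteq> 0 \<and> \<beta> \<noteq> \<alpha> \<longrightarrow> gt \<alpha> \<beta>)" using a b by blast
next
  fix \<alpha>' assume h: "f \<alpha>' \<noteq> 0 \<and> (\<forall>\<beta>. f \<beta> \<noteq> 0 \<and> \<beta> \<noteq> \<alpha>' \<longrightarrow> gt \<alpha>' \<beta>)"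
  show "\<alpha>' = \<alpha>"
  proof (rule ccontr)
    assume n: "\<alpha>' \<noteq> \<alpha>"
    then have "gt \<alpha>' \<alpha>" "gt \<alpha> \<alpha>'" using h a b by auto
    then show False using mo unfolding monomial_ordering_def by blast
  qed
qed

lemma finite_max_gt:
  assumes mo: "monomial_ordering gt" and "finite T" "T \<noteq> {}"
  shows "\<exists>\<alpha>\<in>T. \<forall>\<beta>\<in>T. \<beta> \<noteq> \<alpha> \<longrightarrow> gt \<alpha> \<beta>"
  using assms(2,3)
proof (induction T rule: finite_ne_induct)
  case (singleton x) then show ?case by simp
next
  case (insert x F)
  then obtain \<alpha> where a: "\<alpha> \<in> F" "\<forall>\<beta>\<in>F. \<beta> \<noteq> \<alpha> \<longrightarrow> gt \<alpha> \<beta>" by blast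
  have tr: "\<And>a b c. gt a b \<Longrightarrow> gt b c \<Longrightarrow> gt a c" and tot: "\<And>a b. a \<noteq> b \<Longrightarrow> gt a b \<or> gt b a"
    using mo unfolding monomial_ordering_def by blast+
  have "x \<noteq> \<alpha>" using a insert.hyps by blast
  then consider "gt x \<alpha>" | "gt \<alpha> x" using tot by blast
  then show ?case
  proof cases
    case 1
    have "\<forall>\<beta>\<in>insert x F. \<beta> \<noteq> x \<longrightarrow> gt x \<beta>" using a 1 tr by (metis insert_iff)
    then show ?thesis by blast
  next
    case 2
    have "\<forall>\<beta>\<in>insert x F. \<beta> \<noteq> \<alpha> \<longrightarrow> gt \<alpha> \<beta>" using a 2 by blast
    then show ?thesis using a by blast
  qed
qed

lemma LM_exists:
  fixes f :: "('v::finite, 'a::zero) ser"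
  assumes ldo: "local_degree_ordering gt" and nz: "f \<noteq> (\<lambda>_. 0)"
  shows "f (LM gt f) \<noteq> 0 \<and> (\<forall>\<beta>. f \<beta> \<noteq> 0 \<and> mdeg \<beta> \<le> mdeg (LM gt f) \<longrightarrow> mdeg \<beta> = mdeg (LM gt f))
        \<and> (\<forall>\<beta>. f \<beta> \<noteq> 0 \<and> \<beta> \<noteq> LM gt f \<longrightarrow> gt (LM gt f) \<beta>)"
proof -
  have mo: "monomial_ordering gt" and dg: "\<And>a b. gt a b \<Longrightarrow> mdeg a \<le> mdeg b"
    using ldo unfolding local_degree_ordering_def local_ordering_def by blast+
  have tot: "\<And>a b. a \<noteq> b \<Longrightarrow> gt a b \<or> gt b a"
    using mo unfolding monomial_ordering_def by blast
  obtain \<alpha>0 where a0: "f \<alpha>0 \<noteq> 0" using nz by auto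
  define d where "d = (LEAST d. \<exists>\<alpha>. f \<alpha> \<noteq> 0 \<and> mdeg \<alpha> = d)"
  have dex: "\<exists>\<alpha>. f \<alpha> \<noteq> 0 \<and> mdeg \<alpha> = d" unfolding d_def by (rule LeastI[of _ "mdeg \<alpha>0"]) (use a0 in blast)
  have dmin: "\<And>\<beta>. f \<beta> \<noteq> 0 \<Longrightarrow> d \<le> mdeg \<beta>" unfolding d_def by (rule Least_le) blast
  define T where "T = {\<alpha>. f \<alpha> \<noteq> 0 \<and> mdeg \<alpha> = d}"
  have "finite T" unfolding T_def by (rule finite_subset[OF _ finite_mdeg_le[of d]]) auto
  moreover have "T \<noteq> {}" using dex unfolding T_def by blast
  ultimately obtain \<alpha> where a: "\<alpha> \<in> T" "\<forall>\<beta>\<in>T. \<beta> \<noteq> \<alpha> \<longrightarrow> gt \<alpha> \<beta>" using finite_max_gt[OF mo] by blast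
  have all: "\<forall>\<beta>. f \<beta> \<noteq> 0 \<and> \<beta> \<noteq> \<alpha> \<longrightarrow> gt \<alpha> \<beta>"
  proof (intro allI impI)
    fix \<beta> assume b: "f \<beta> \<noteq> 0 \<and> \<beta> \<noteq> \<alpha>"
    show "gt \<alpha> \<beta>"
    proof (cases "mdeg \<beta> = d")
      case True then show ?thesis using a b unfolding T_def by blast
    next
      case False
      then have "mdeg \<beta> > mdeg \<alpha>" using dmin[of \<beta>] b a(1) unfolding T_def by auto
      then show ?thesis using tot[of \<alpha> \<beta>] dg[of \<beta> \<alpha>] b by auto
    qed
  qed
  have "LM gt f = \<alpha>" by (rule LM_eqI[OF mo]) (use a all in \<open>auto simp: T_def\<close>)
  then show ?thesis using a all dmin unfolding T_def by (auto intro: antisym)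
qed

definition Kset :: "('v::finite, 'a::comm_ring_1) ser set \<Rightarrow> ('v, 'a) ser set" where
  "Kset I = {f. \<forall>d. \<exists>p\<in>I. \<forall>\<alpha>. mdeg \<alpha> \<le> d \<longrightarrow> f \<alpha> = p \<alpha>}"

lemma Kset_ideal:
  assumes pi: "poly_ideal I"
  shows "ser_ideal (Kset I)"
  unfolding ser_ideal_def
proof (intro conjI ballI allI impI)
  have "ser_zero \<in> I" using pi unfolding poly_ideal_def by blast
  then show "ser_zero \<in> Kset I" unfolding Kset_def by blast
next
  fix f g assume f: "f \<in> Kset I" and g: "g \<in> Kset I"
  show "ser_add f g \<in> Kset I" unfolding Kset_def
  proof (intro CollectI allI)
    fix d
    obtain p where p: "p \<in> I" "\<forall>\<alpha>. mdeg \<alpha> \<le> d \<longrightarrow> f \<alpha> = p \<alpha>" using f unfolding Kset_def by blast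
    obtain q where q: "q \<in> I" "\<forall>\<alpha>. mdeg \<alpha> \<le> d \<longrightarrow> g \<alpha> = q \<alpha>" using g unfolding Kset_def by blast
    have "ser_add p q \<in> I" using pi p q unfolding poly_ideal_def by blast
    moreover have "\<forall>\<alpha>. mdeg \<alpha> \<le> d \<longrightarrow> ser_add f g \<alpha> = ser_add p q \<alpha>"
      using p q unfolding ser_add_def by simp
    ultimately show "\<exists>p\<in>I. \<forall>\<alpha>. mdeg \<alpha> \<le> d \<longrightarrow> ser_add f g \<alpha> = p \<alpha>" by blast
  qed
next
  fix h f assume f: "f \<in> Kset I"
  show "ser_mult h f \<in> Kset I" unfolding Kset_def
  proof (intro CollectI allI)
    fix d
    obtain p where p: "p \<in> I" "\<forall>\<alpha>. mdeg \<alpha> \<le> d \<longrightarrow> f \<alpha> = p \<alpha>" using f unfolding Kset_def by blast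
    define ht where "ht = (\<lambda>\<alpha>. if mdeg \<alpha> \<le> d then h \<alpha> else 0)"
    have "is_poly ht" unfolding is_poly_def ht_def
      by (rule finite_subset[OF _ finite_mdeg_le[of d]]) auto
    then have "ser_mult ht p \<in> I" using pi p unfolding poly_ideal_def by blast
    moreover have "\<forall>\<gamma>. mdeg \<gamma> \<le> d \<longrightarrow> ser_mult h f \<gamma> = ser_mult ht p \<gamma>"
    proof (intro allI impI)
      fix \<gamma> :: "'a \<Rightarrow> nat" assume dg: "mdeg \<gamma> \<le> d"
      show "ser_mult h f \<gamma> = ser_mult ht p \<gamma>" unfolding ser_mult_def
      proof (rule sum.cong[OF refl])
        fix \<alpha> assume "\<alpha> \<in> {\<alpha>. lev \<alpha> \<gamma>}"
        then have "mdeg \<alpha> \<le> d" "mdeg (\<lambda>i. \<gamma> i - \<alpha> i) \<le> d"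
          using mdeg_mono[of \<alpha> \<gamma>] mdeg_diff[of \<alpha> \<gamma>] dg by auto
        then show "h \<alpha> * f (\<lambda>i. \<gamma> i - \<alpha> i) = ht \<alpha> * p (\<lambda>i. \<gamma> i - \<alpha> i)"
          using p unfolding ht_def by simp
      qed
    qed
    ultimately show "\<exists>q\<in>I. \<forall>\<alpha>. mdeg \<alpha> \<le> d \<longrightarrow> ser_mult h f \<alpha> = q \<alpha>" by blast
  qed
qed


lemma gen_sub: "B \<subseteq> poly_ideal_gen B"
  unfolding poly_ideal_gen_def by blast

lemma gen_mono: "A \<subseteq> poly_ideal_gen B \<Longrightarrow> poly_ideal_gen A \<subseteq> poly_ideal_gen B"
  unfolding poly_ideal_gen_def by blast

lemma ser_one_S:
  assumes mo: "monomial_ordering gt"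
  shows "(ser_one :: ('v::finite,'a::comm_ring_1) ser) \<in> S_gt gt"
proof -
  have LM1: "LM gt (ser_one :: ('v,'a) ser) = (\<lambda>_. 0)"
    by (rule LM_eqI[OF mo]) (simp_all add: ser_one_def monom_term_def)
  have "is_poly (ser_one :: ('v,'a) ser)" unfolding is_poly_def ser_one_def monom_term_def by simp
  moreover have "(ser_one :: ('v,'a) ser) \<noteq> ser_zero"
    unfolding ser_one_def ser_zero_def monom_term_def by (metis zero_neq_one)
  moreover have "LT gt (ser_one :: ('v,'a) ser) = ser_one"
    unfolding LT_def LC_def LM1 by (simp add: ser_one_def monom_term_def)
  ultimately show ?thesis unfolding S_gt_def by blast
qed

lemma loc_in_gen:
  assumes "g \<in> loc_ideal gt I"
  shows "g \<in> ser_ideal_gen (I :: ('v::finite,'a::comm_ring_1) ser set)"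
proof -
  obtain u where u: "u \<in> S_gt gt" "ser_mult u g \<in> I" using assms unfolding loc_ideal_def by blast
  have inv: "ser_mult (hi u) u = ser_one" by (rule hi_inv[of u]) (rule Sgt_const[OF u(1)])
  have eq: "ser_mult (hi u) (ser_mult u g) = g"
  proof -
    have "ser_mult (hi u) (ser_mult u g) = ser_mult (ser_mult (hi u) u) g" by (rule ser_mult_assoc[symmetric])
    also have "\<dots> = ser_mult ser_one g" by (simp only: inv)
    also have "\<dots> = g" by (rule ser_one_mult)
    finally show ?thesis .
  qed
  show ?thesis unfolding ser_ideal_gen_def
  proof (rule InterI)
    fix J assume "J \<in> {J. ser_ideal J \<and> I \<subseteq> J}"
    then have "ser_mult (hi u) (ser_mult u g) \<in> J" using u(2) unfolding ser_ideal_def by blast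
    then show "g \<in> J" using eq by simp
  qed
qed

lemma LT_approx:
  fixes I :: "('v::finite,'a::comm_ring_1) ser set"
  assumes ldo: "local_degree_ordering gt" and pi: "poly_ideal I"
    and f: "f \<in> ser_ideal_gen I" and nz: "f \<noteq> ser_zero"
  shows "\<exists>p\<in>loc_ideal gt I. p \<noteq> ser_zero \<and> LT gt f = LT gt p"
proof -
  have mo: "monomial_ordering gt" and dg: "\<And>a b. gt a b \<Longrightarrow> mdeg a \<le> mdeg b"
    using ldo unfolding local_degree_ordering_def local_ordering_def by blast+
  have tot: "\<And>a b. a \<noteq> b \<Longrightarrow> gt a b \<or> gt b a"
    using mo unfolding monomial_ordering_def by blast
  have "I \<subseteq> Kset I" unfolding Kset_def by blast
  then have "ser_ideal_gen I \<subseteq> Kset I" using Kset_ideal[OF pi] unfolding ser_ideal_gen_def by blast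
  with f have fK: "f \<in> Kset I" by blast
  define \<alpha> where "\<alpha> = LM gt f"
  have LMf: "f \<alpha> \<noteq> 0" "\<forall>\<beta>. f \<beta> \<noteq> 0 \<and> \<beta> \<noteq> \<alpha> \<longrightarrow> gt \<alpha> \<beta>"
    using LM_exists[OF ldo, of f] nz unfolding \<alpha>_def ser_zero_def by auto
  obtain p where p: "p \<in> I" "\<forall>\<beta>. mdeg \<beta> \<le> mdeg \<alpha> \<longrightarrow> f \<beta> = p \<beta>"
    using fK unfolding Kset_def by blast
  have pa: "p \<alpha> = f \<alpha>" using p by simp
  have LMp: "LM gt p = \<alpha>"
  proof (rule LM_eqI[OF mo])
    show "p \<alpha> \<noteq> 0" using pa LMf by simp
    show "\<forall>\<beta>. p \<beta> \<noteq> 0 \<and> \<beta> \<noteq> \<alpha> \<longrightarrow> gt \<alpha> \<beta>"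
    proof (intro allI impI)
      fix \<beta> assume b: "p \<beta> \<noteq> 0 \<and> \<beta> \<noteq> \<alpha>"
      show "gt \<alpha> \<beta>"
      proof (cases "mdeg \<beta> \<le> mdeg \<alpha>")
        case True
        then have "f \<beta> \<noteq> 0" using p(2) b by simp
        then show ?thesis using LMf(2) b by blast
      next
        case False then show ?thesis using tot[of \<alpha> \<beta>] dg[of \<beta> \<alpha>] b by auto
      qed
    qed
  qed
  have "LT gt f = LT gt p" unfolding LT_def LC_def LMp \<alpha>_def[symmetric] pa ..
  moreover have "p \<in> loc_ideal gt I"
    unfolding loc_ideal_def by (rule CollectI, rule bexI[of _ ser_one]) (simp_all add: ser_one_mult p(1) ser_one_S[OF mo])
  moreover have "p \<noteq> ser_zero" using pa LMf unfolding ser_zero_def by auto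
  ultimately show ?thesis by blast
qed

theorem proposition7p1:
  fixes gt :: "('v::finite \<Rightarrow> nat) \<Rightarrow> ('v \<Rightarrow> nat) \<Rightarrow> bool"
    and I G :: "('v, 'a::comm_ring_1) ser set"
  assumes "noetherian TYPE('a)"
    and "local_degree_ordering gt"
    and "poly_ideal I"
  shows "(standard_basis gt G (loc_ideal gt I) \<longrightarrow> standard_basis gt G (ser_ideal_gen I))
       \<and> (strong_standard_basis gt G (loc_ideal gt I) \<longrightarrow> strong_standard_basis gt G (ser_ideal_gen I))"
proof (intro conjI impI)
  assume sb: "standard_basis gt G (loc_ideal gt I)"
  have GS: "G \<subseteq> ser_ideal_gen I"
  proof
    fix g assume "g \<in> G"
    then have "g \<in> loc_ideal gt I" using sb unfolding standard_basis_def by blast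
    then show "g \<in> ser_ideal_gen I" by (rule loc_in_gen)
  qed
  have eq: "Lid gt G = Lid gt (loc_ideal gt I)" using sb unfolding standard_basis_def by blast
  have "Lid gt G \<subseteq> Lid gt (ser_ideal_gen I)" unfolding Lid_def
  proof (rule gen_mono)
    have "LT gt ` (G - {ser_zero}) \<subseteq> LT gt ` (ser_ideal_gen I - {ser_zero})" using GS by blast
    then show "LT gt ` (G - {ser_zero}) \<subseteq> poly_ideal_gen (LT gt ` (ser_ideal_gen I - {ser_zero}))"
      using gen_sub[of "LT gt ` (ser_ideal_gen I - {ser_zero})"] by (rule subset_trans)
  qed
  moreover have "Lid gt (ser_ideal_gen I) \<subseteq> Lid gt G"
    unfolding eq unfolding Lid_def
  proof (rule gen_mono, rule subsetI)
    fix t assume "t \<in> LT gt ` (ser_ideal_gen I - {ser_zero})"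
    then obtain f where f: "f \<in> ser_ideal_gen I" "f \<noteq> ser_zero" "t = LT gt f" by blast
    obtain p where "p \<in> loc_ideal gt I" "p \<noteq> ser_zero" "LT gt f = LT gt p"
      using LT_approx[OF assms(2,3) f(1,2)] by blast
    then have "t \<in> LT gt ` (loc_ideal gt I - {ser_zero})" using f(3) by blast
    then show "t \<in> poly_ideal_gen (LT gt ` (loc_ideal gt I - {ser_zero}))"
      by (rule subsetD[OF gen_sub])
  qed
  ultimately show "standard_basis gt G (ser_ideal_gen I)"
    using sb GS unfolding standard_basis_def by blast
next
  assume sb: "strong_standard_basis gt G (loc_ideal gt I)"
  have GS: "G \<subseteq> ser_ideal_gen I"
  proof
    fix g assume "g \<in> G"
    then have "g \<in> loc_ideal gt I" using sb unfolding strong_standard_basis_def by blast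
    then show "g \<in> ser_ideal_gen I" by (rule loc_in_gen)
  qed
  have "\<forall>f\<in>ser_ideal_gen I - {ser_zero}. \<exists>g\<in>G. \<exists>c \<gamma>. LT gt f = ser_mult (monom_term c \<gamma>) (LT gt g)"
  proof
    fix f assume "f \<in> ser_ideal_gen I - {ser_zero}"
    then obtain p where "p \<in> loc_ideal gt I" "p \<noteq> ser_zero" "LT gt f = LT gt p"
      using LT_approx[OF assms(2,3)] by blast
    then show "\<exists>g\<in>G. \<exists>c \<gamma>. LT gt f = ser_mult (monom_term c \<gamma>) (LT gt g)"
      using sb unfolding strong_standard_basis_def by auto
  qed
  then show "strong_standard_basis gt G (ser_ideal_gen I)"
    using sb GS unfolding strong_standard_basis_def by blast
qed

end
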